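(* Let $\mathcal{L}$ be a Lie algebra over $\mathbf{k}$, $k\in\mathbf{k}$ nonzero, and let $((\mathcal{U},q),i)$ be the enveloping$^{6\text{-th}}$ algebra of $\mathcal{L}$. Then there exists a unique invariant anti-homomorphism $S$ of $(\mathcal{U},q)$ such that $S(q)=1-q$ and $S(i(x))=-\frac1k i(x)-k\,q\,i(x)+\frac1k i(x)q$ for all $x\in\mathcal{L}$.
   Context: Invariant algebra: for an associative algebra $A$ with identity and idempotent $q$, $(A,q)=\{x\in A: qxq=qx\}$; $\mathrm{Lie}(A,q)$ is $(A,q)$ with bracket $[x,y]_{6,k}=xy-yx-xyq+yxq+kxqy-kyqx$; invariant homomorphisms are unital multiplicative linear maps preserving the distinguished idempotents. The enveloping$^{6\text{-th}}$ algebra $((\mathcal{U},q),i)$: $(\mathcal{U},q)$ an invariant algebra, $i:\mathcal{L}\to\mathrm{Lie}(\mathcal{U},q)$ a Lie homomorphism, such that every Lie homomorphism $f:\mathcal{L}\to\mathrm{Lie}(A,q_A)$ into an invariant algebra factors uniquely as $f=f'\circ i$ with $f'$ an invariant homomorphism; here $(\mathcal{U},q)=\mathcal{U}$. For an invariant algebra $(A,q)$, the opposite invariant algebra is $(\mathring A,1-q)$ where $\mathring A=A$ with product $x\circ y=yx$. An invariant anti-homomorphism of $(A,q)$ is an invariant homomorphism $(A,q)\to(\mathring A,1-q)$, i.e. a linear map $S$ with $S(xy)=S(y)S(x)$, $S(1)=1$, $S(q)=1-q$. *)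

theory Defs
  imports Complex_Main
begin

text \<open>A (unital associative) algebra over a field 'k is modelled on a
  whole type 'a carrying an abelian group structure (type class), a scalar
  multiplication sc making it a k-vector space, an explicit bilinear associative
  multiplication m and a unit e. Multiplication is explicit so that the opposite
  algebra (same type, swapped product) is again such a structure.\<close>

definition k_algebra ::
  "('k::field \<Rightarrow> 'a::ab_group_add \<Rightarrow> 'a) \<Rightarrow> ('a \<Rightarrow> 'a \<Rightarrow> 'a) \<Rightarrow> 'a \<Rightarrow> bool" where
  "k_algebra sc m e \<longleftrightarrow>
     Vector_Spaces.vector_space sc \<and>
     (\<forall>x y z. m (m x y) z = m x (m y z)) \<and>
     (\<forall>x. m e x = x \<and> m x e = x) \<and>
     (\<forall>x y z. m (x + y) z = m x z + m y z) \<and>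
     (\<forall>x y z. m x (y + z) = m x y + m x z) \<and>
     (\<forall>a x y. m (sc a x) y = sc a (m x y) \<and> m x (sc a y) = sc a (m x y))"

definition invariant_algebra ::
  "('k::field \<Rightarrow> 'a::ab_group_add \<Rightarrow> 'a) \<Rightarrow> ('a \<Rightarrow> 'a \<Rightarrow> 'a) \<Rightarrow> 'a \<Rightarrow> 'a \<Rightarrow> bool" where
  "invariant_algebra sc m e q \<longleftrightarrow> k_algebra sc m e \<and> m q q = q"

definition inv_part :: "('a \<Rightarrow> 'a \<Rightarrow> 'a) \<Rightarrow> 'a \<Rightarrow> 'a set" where
  "inv_part m q = {x. m (m q x) q = m q x}"

definition bracket6 ::
  "('k \<Rightarrow> 'a::ab_group_add \<Rightarrow> 'a) \<Rightarrow> ('a \<Rightarrow> 'a \<Rightarrow> 'a) \<Rightarrow> 'a \<Rightarrow> 'k \<Rightarrow> 'a \<Rightarrow> 'a \<Rightarrow> 'a" where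
  "bracket6 sc m q k x y =
     m x y - m y x - m (m x y) q + m (m y x) q + sc k (m (m x q) y) - sc k (m (m y q) x)"

definition lie_algebra ::
  "('k::field \<Rightarrow> 'l::ab_group_add \<Rightarrow> 'l) \<Rightarrow> ('l \<Rightarrow> 'l \<Rightarrow> 'l) \<Rightarrow> bool" where
  "lie_algebra sL br \<longleftrightarrow>
     Vector_Spaces.vector_space sL \<and>
     (\<forall>x y z. br (x + y) z = br x z + br y z) \<and>
     (\<forall>x y z. br x (y + z) = br x y + br x z) \<and>
     (\<forall>a x y. br (sL a x) y = sL a (br x y) \<and> br x (sL a y) = sL a (br x y)) \<and>
     (\<forall>x. br x x = 0) \<and>
     (\<forall>x y z. br x (br y z) + br y (br z x) + br z (br x y) = 0)"

definition lie_hom6 ::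
  "('k::field \<Rightarrow> 'l::ab_group_add \<Rightarrow> 'l) \<Rightarrow> ('l \<Rightarrow> 'l \<Rightarrow> 'l) \<Rightarrow> 'k \<Rightarrow>
   ('k \<Rightarrow> 'a::ab_group_add \<Rightarrow> 'a) \<Rightarrow> ('a \<Rightarrow> 'a \<Rightarrow> 'a) \<Rightarrow> 'a \<Rightarrow> ('l \<Rightarrow> 'a) \<Rightarrow> bool" where
  "lie_hom6 sL br k sc m q f \<longleftrightarrow>
     Vector_Spaces.linear sL sc f \<and>
     (\<forall>x. f x \<in> inv_part m q) \<and>
     (\<forall>x y. f (br x y) = bracket6 sc m q k (f x) (f y))"

definition inv_hom ::
  "('k::field \<Rightarrow> 'a::ab_group_add \<Rightarrow> 'a) \<Rightarrow> ('a \<Rightarrow> 'a \<Rightarrow> 'a) \<Rightarrow> 'a \<Rightarrow> 'a \<Rightarrow>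
   ('k \<Rightarrow> 'b::ab_group_add \<Rightarrow> 'b) \<Rightarrow> ('b \<Rightarrow> 'b \<Rightarrow> 'b) \<Rightarrow> 'b \<Rightarrow> 'b \<Rightarrow> ('a \<Rightarrow> 'b) \<Rightarrow> bool" where
  "inv_hom sc1 m1 e1 q1 sc2 m2 e2 q2 f \<longleftrightarrow>
     Vector_Spaces.linear sc1 sc2 f \<and>
     (\<forall>x y. f (m1 x y) = m2 (f x) (f y)) \<and>
     f e1 = e2 \<and> f q1 = q2"

definition enveloping6 ::
  "('k::field \<Rightarrow> 'l::ab_group_add \<Rightarrow> 'l) \<Rightarrow> ('l \<Rightarrow> 'l \<Rightarrow> 'l) \<Rightarrow> 'k \<Rightarrow>
   ('k \<Rightarrow> 'u::ab_group_add \<Rightarrow> 'u) \<Rightarrow> ('u \<Rightarrow> 'u \<Rightarrow> 'u) \<Rightarrow> 'u \<Rightarrow> 'u \<Rightarrow> ('l \<Rightarrow> 'u) \<Rightarrow> bool" where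
  "enveloping6 sL br k sc m e q i \<longleftrightarrow>
     invariant_algebra sc m e q \<and>
     lie_hom6 sL br k sc m q i \<and>
     (\<forall>mA eA qA f. invariant_algebra sc mA eA qA \<and> lie_hom6 sL br k sc mA qA f \<longrightarrow>
        (\<exists>!f'. inv_hom sc m e q sc mA eA qA f' \<and> f = f' \<circ> i))"

definition opp :: "('a \<Rightarrow> 'a \<Rightarrow> 'a) \<Rightarrow> 'a \<Rightarrow> 'a \<Rightarrow> 'a" where
  "opp m x y = m y x"

definition inv_antihom ::
  "('k::field \<Rightarrow> 'a::ab_group_add \<Rightarrow> 'a) \<Rightarrow> ('a \<Rightarrow> 'a \<Rightarrow> 'a) \<Rightarrow> 'a \<Rightarrow> 'a \<Rightarrow> ('a \<Rightarrow> 'a) \<Rightarrow> bool" where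
  "inv_antihom sc m e q S \<longleftrightarrow> inv_hom sc m e q sc (opp m) e (e - q) S"

end

theory Submission imports Defs begin

fun red :: "nat list \<Rightarrow> nat list" where
  "red [] = []"
| "red (x # xs) = (if 2 \<le> x then x # filter (\<lambda>y. y < 2) xs else x # red xs)"

definition coef :: "nat list \<Rightarrow> ('k::field \<times> nat list) list \<Rightarrow> 'k" where
  "coef w P = sum_list (map fst (filter (\<lambda>p. snd p = w) P))"

definition pneg :: "('k::field \<times> nat list) list \<Rightarrow> ('k \<times> nat list) list" where
  "pneg P = map (\<lambda>(c,w). (- c, w)) P"
definition psc :: "'k::field \<Rightarrow> ('k \<times> nat list) list \<Rightarrow> ('k \<times> nat list) list" where
  "psc d P = map (\<lambda>(c,w). (d * c, w)) P"
definition pmul :: "('k::field \<times> nat list) list \<Rightarrow> ('k \<times> nat list) list \<Rightarrow> ('k \<times> nat list) list" where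
  "pmul P Q = concat (map (\<lambda>(c,u). map (\<lambda>(d,v). (c * d, u @ v)) Q) P)"

definition pF :: "'k::field \<Rightarrow> ('k \<times> nat list) list \<Rightarrow> ('k \<times> nat list) list \<Rightarrow> ('k \<times> nat list) list" where
  "pF k Q x = pneg (psc (1/k) x) @ pneg (psc k (pmul Q x)) @ psc (1/k) (pmul x Q)"
definition pbr :: "'k::field \<Rightarrow> (('k \<times> nat list) list \<Rightarrow> ('k \<times> nat list) list \<Rightarrow> ('k \<times> nat list) list)
   \<Rightarrow> ('k \<times> nat list) list \<Rightarrow> ('k \<times> nat list) list \<Rightarrow> ('k \<times> nat list) list \<Rightarrow> ('k \<times> nat list) list" where
  "pbr k mul Q x y = mul x y @ pneg (mul y x) @ pneg (mul (mul x y) Q) @ mul (mul y x) Q @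
     psc k (mul (mul x Q) y) @ pneg (psc k (mul (mul y Q) x))"

locale ialg =
  fixes sc :: "'k::field \<Rightarrow> 'u::ab_group_add \<Rightarrow> 'u" and m :: "'u \<Rightarrow> 'u \<Rightarrow> 'u" and e :: 'u
  assumes KA: "k_algebra sc m e"
begin

lemma vs: "vector_space sc" using KA by (simp add: k_algebra_def)
interpretation md: module sc using vs by (simp add: module_iff_vector_space)

lemma m_assoc: "m (m x y) z = m x (m y z)" using KA by (simp add: k_algebra_def)
lemma m_e: "m e x = x" "m x e = x" using KA by (simp_all add: k_algebra_def)
lemma m_addl: "m (x + y) z = m x z + m y z" using KA by (simp add: k_algebra_def)
lemma m_addr: "m x (y + z) = m x y + m x z" using KA by (simp add: k_algebra_def)
lemma m_scl: "m (sc a x) y = sc a (m x y)" using KA by (simp add: k_algebra_def)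
lemma m_scr: "m x (sc a y) = sc a (m x y)" using KA by (simp add: k_algebra_def)

lemma m_0l: "m 0 x = 0"
proof - have "m 0 x = m 0 x + m 0 x" using m_addl[of 0 0 x] by simp thus ?thesis by simp qed
lemma m_0r: "m x 0 = 0"
proof - have "m x 0 = m x 0 + m x 0" using m_addr[of x 0 0] by simp thus ?thesis by simp qed
lemma m_negl: "m (- x) y = - m x y"
proof -
  have "m x y + m (- x) y = 0" using m_addl[of x "-x" y] by (simp add: m_0l)
  thus ?thesis by (rule minus_unique[symmetric])
qed
lemma m_negr: "m y (- x) = - m y x"
proof -
  have "m y x + m y (- x) = 0" using m_addr[of y x "-x"] by (simp add: m_0r)
  thus ?thesis by (rule minus_unique[symmetric])
qed
lemma m_diffl: "m (x - y) z = m x z - m y z"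
  by (simp only: diff_conv_add_uminus m_addl m_negl)
lemma m_diffr: "m z (x - y) = m z x - m z y"
  by (simp only: diff_conv_add_uminus m_addr m_negr)

fun ev :: "(nat \<Rightarrow> 'u) \<Rightarrow> nat list \<Rightarrow> 'u" where
  "ev g [] = e"
| "ev g (x # xs) = m (g x) (ev g xs)"

definition pev :: "(nat \<Rightarrow> 'u) \<Rightarrow> ('k \<times> nat list) list \<Rightarrow> 'u" where
  "pev g P = sum_list (map (\<lambda>(c,w). sc c (ev g w)) P)"

lemma ev_append: "ev g (u @ v) = m (ev g u) (ev g v)"
  by (induction u) (simp_all add: m_e m_assoc)

lemma pev_Nil: "pev g [] = 0" by (simp add: pev_def)
lemma pev_Cons: "pev g ((c,w) # P) = sc c (ev g w) + pev g P" by (simp add: pev_def)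
lemma pev_append: "pev g (P @ Q) = pev g P + pev g Q" by (simp add: pev_def)
lemma pev_pneg: "pev g (pneg P) = - pev g P"
  by (induction P) (auto simp: pev_def pneg_def)
lemma pev_psc: "pev g (psc d P) = sc d (pev g P)"
  by (induction P) (auto simp: pev_def psc_def md.scale_right_distrib)
lemma pev_pmul: "pev g (pmul P Q) = m (pev g P) (pev g Q)"
proof (induction P)
  case Nil thus ?case by (simp add: pmul_def pev_def m_0l)
next
  case (Cons p P)
  obtain c u where p: "p = (c,u)" by force
  have "pev g (map (\<lambda>(d,v). (c * d, u @ v)) Q) = m (sc c (ev g u)) (pev g Q)"
    by (induction Q) (auto simp: pev_def m_0r m_addr m_scl m_scr ev_append)
  then show ?case using Cons by (simp add: pmul_def p pev_append pev_Cons m_addl)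
qed
lemma pev_atom: "pev g [(1, [i])] = g i" by (simp add: pev_def m_e)
lemma pev_e: "pev g [(1, [])] = e" by (simp add: pev_def)

lemma ev_qfilt:
  assumes qq: "m q q = q" and hq: "\<And>i. 2 \<le> i \<Longrightarrow> g i = q"
    and ha: "\<And>i. i < 2 \<Longrightarrow> m q (m (g i) q) = m q (g i)"
  shows "m q (ev g ys) = m q (ev g (filter (\<lambda>y. y < 2) ys))"
proof (induction ys)
  case Nil thus ?case by simp
next
  case (Cons y ys)
  show ?case
  proof (cases "y < 2")
    case True
    have "m q (ev g (y # ys)) = m (m q (g y)) (ev g ys)" by (simp add: m_assoc)
    also have "\<dots> = m (m q (m (g y) q)) (ev g ys)" using ha[OF True] by simp
    also have "\<dots> = m (m q (g y)) (m q (ev g ys))" by (simp add: m_assoc)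
    also have "\<dots> = m (m q (g y)) (m q (ev g (filter (\<lambda>y. y < 2) ys)))" using Cons by simp
    also have "\<dots> = m (m q (m (g y) q)) (ev g (filter (\<lambda>y. y < 2) ys))" by (simp add: m_assoc)
    also have "\<dots> = m q (ev g (filter (\<lambda>y. y < 2) (y # ys)))" using ha[OF True] True by (simp add: m_assoc)
    finally show ?thesis .
  next
    case False
    hence "g y = q" using hq by simp
    hence "m q (ev g (y # ys)) = m q (ev g ys)" using qq by (simp add: m_assoc[symmetric])
    thus ?thesis using Cons False by simp
  qed
qed

lemma ev_red:
  assumes qq: "m q q = q" and hq: "\<And>i. 2 \<le> i \<Longrightarrow> g i = q"
    and ha: "\<And>i. i < 2 \<Longrightarrow> m q (m (g i) q) = m q (g i)"
  shows "ev g (red w) = ev g w"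
proof (induction w)
  case Nil thus ?case by simp
next
  case (Cons x xs)
  show ?case
  proof (cases "2 \<le> x")
    case True
    then show ?thesis using ev_qfilt[OF qq hq ha, where ys=xs] hq[OF True] by simp
  qed (use Cons in simp)
qed

lemma pev_red:
  assumes qq: "m q q = q" and hq: "\<And>i. 2 \<le> i \<Longrightarrow> g i = q"
    and ha: "\<And>i. i < 2 \<Longrightarrow> m q (m (g i) q) = m q (g i)"
  shows "pev g (map (\<lambda>(c,w). (c, red w)) P) = pev g P"
  by (induction P) (auto simp: pev_def ev_red[OF qq hq ha])

lemma pev_split: "pev g P = sc (coef w P) (ev g w) + pev g (filter (\<lambda>p. snd p \<noteq> w) P)"
proof (induction P)
  case Nil thus ?case by (simp add: pev_def coef_def)
next
  case (Cons p P)
  obtain c u where p: "p = (c,u)" by force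
  show ?case using Cons
    by (auto simp: p pev_Cons coef_def md.scale_left_distrib ac_simps)
qed

lemma pev_zero: "(\<forall>w \<in> snd ` set P. coef w P = 0) \<Longrightarrow> pev g P = 0"
proof (induction "length P" arbitrary: P rule: less_induct)
  case less
  show ?case
  proof (cases P)
    case Nil thus ?thesis by (simp add: pev_def)
  next
    case (Cons p P')
    obtain c w where p: "p = (c,w)" by force
    let ?R = "filter (\<lambda>p. snd p \<noteq> w) P"
    have len: "length ?R < length P" using Cons p
      by simp (meson le_imp_less_Suc length_filter_le)
    have "\<forall>v \<in> snd ` set ?R. coef v ?R = 0"
    proof
      fix v assume "v \<in> snd ` set ?R"
      hence v: "v \<noteq> w" "v \<in> snd ` set P" by auto
      have fe: "(\<lambda>x. snd x \<noteq> w \<and> snd x = v) = (\<lambda>p. snd p = v)" using v(1) by auto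
      have "coef v ?R = coef v P" unfolding coef_def filter_filter fe ..
      thus "coef v ?R = 0" using less.prems v(2) by simp
    qed
    hence "pev g ?R = 0" using less.hyps[OF len] by blast
    moreover have "w \<in> snd ` set P" using Cons p by simp
    hence "coef w P = 0" using less.prems by blast
    ultimately show ?thesis by (subst pev_split[of g P w]) simp
  qed
qed


definition FF where "FF k q x = - sc (1/k) x - sc k (m q x) + sc (1/k) (m x q)"

lemma pev_pF: "pev g (pF k Q x) = FF k (pev g Q) (pev g x)"
  by (simp add: pF_def FF_def pev_append pev_pneg pev_psc pev_pmul)

lemma pev_pbr: "pev g (pbr k pmul Q x y) = bracket6 sc m (pev g Q) k (pev g x) (pev g y)"
  by (simp add: pbr_def bracket6_def pev_append pev_pneg pev_psc pev_pmul add.assoc)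

lemma pev_pbr_opp: "pev g (pbr k (\<lambda>x y. pmul y x) Q x y) = bracket6 sc (opp m) (pev g Q) k (pev g x) (pev g y)"
  by (simp add: pbr_def bracket6_def pev_append pev_pneg pev_psc pev_pmul add.assoc opp_def)

lemma key:
  assumes k: "k \<noteq> 0" and qq: "m q q = q"
    and ra: "m q (m a q) = m q a" and rb: "m q (m b q) = m q b"
  shows "FF k q (bracket6 sc m q k a b) = bracket6 sc (opp m) (e - q) k (FF k q a) (FF k q b)"
proof -
  define g where "g = (\<lambda>i::nat. if i = 0 then a else if i = 1 then b else q)"
  have hq: "\<And>i. 2 \<le> i \<Longrightarrow> g i = q" by (simp add: g_def)
  have ha: "\<And>i. i < 2 \<Longrightarrow> m q (m (g i) q) = m q (g i)"
    using ra rb by (auto simp: g_def less_2_cases_iff)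
  define P0 where "P0 = pF k [(1,[2])] (pbr k pmul [(1,[2])] [(1,[0])] [(1,[1])]) @
     pneg (pbr k (\<lambda>x y. pmul y x) ([(1,[])] @ pneg [(1,[2])]) (pF k [(1,[2])] [(1,[0])]) (pF k [(1,[2])] [(1,[1])]))"
  have "pev g P0 = FF k q (bracket6 sc m q k a b) - bracket6 sc (opp m) (e - q) k (FF k q a) (FF k q b)"
    unfolding P0_def pev_append pev_pneg pev_pF pev_pbr pev_pbr_opp pev_atom pev_e
    by (simp add: g_def)
  moreover have "pev g P0 = 0"
  proof -
    have "pev g (map (\<lambda>(c,w). (c, red w)) P0) = 0"
      apply (rule pev_zero)
      unfolding P0_def pF_def pbr_def pmul_def pneg_def psc_def
      apply (simp add: coef_def)
      done
    thus ?thesis using pev_red[OF qq hq ha] by simp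
  qed
  ultimately show ?thesis by simp
qed

lemma FF_add: "FF k q (x + y) = FF k q x + FF k q y"
  by (simp add: FF_def m_addl m_addr md.scale_right_distrib algebra_simps)

lemma FF_sc: "FF k q (sc c x) = sc c (FF k q x)"
  by (simp add: FF_def m_scl m_scr md.scale_right_diff_distrib md.scale_right_distrib md.scale_left_commute mult.commute)

lemma FF_inv:
  assumes qq: "m q q = q" and ra: "m q (m a q) = m q a"
  shows "m (e - q) (m (FF k q a) (e - q)) = m (FF k q a) (e - q)"
proof -
  define g where "g = (\<lambda>i::nat. if i = 0 then a else if i = 1 then a else q)"
  have hq: "\<And>i. 2 \<le> i \<Longrightarrow> g i = q" by (simp add: g_def)
  have ha: "\<And>i. i < 2 \<Longrightarrow> m q (m (g i) q) = m q (g i)"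
    using ra by (auto simp: g_def less_2_cases_iff)
  define P0 where "P0 = pmul ([(1,[])] @ pneg [(1,[2])]) (pmul (pF k [(1,[2])] [(1,[0])]) ([(1,[])] @ pneg [(1,[2])]))
      @ pneg (pmul (pF k [(1,[2])] [(1,[0])]) ([(1,[])] @ pneg [(1,[2])]))"
  have "pev g P0 = m (e - q) (m (FF k q a) (e - q)) - m (FF k q a) (e - q)"
    unfolding P0_def pev_append pev_pneg pev_pF pev_pmul pev_atom pev_e
    by (simp add: g_def)
  moreover have "pev g P0 = 0"
  proof -
    have "pev g (map (\<lambda>(c,w). (c, red w)) P0) = 0"
      apply (rule pev_zero)
      unfolding P0_def pF_def pbr_def pmul_def pneg_def psc_def
      apply (simp add: coef_def)
      done
    thus ?thesis using pev_red[OF qq hq ha] by simp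
  qed
  ultimately show ?thesis by simp
qed

lemma opp_alg: "m q q = q \<Longrightarrow> invariant_algebra sc (opp m) e (e - q)"
  using KA unfolding invariant_algebra_def k_algebra_def opp_def
  by (simp add: m_diffl m_diffr m_e)
end

theorem proposition7p1:
  fixes sL :: "'k::field \<Rightarrow> 'l::ab_group_add \<Rightarrow> 'l"
    and br :: "'l \<Rightarrow> 'l \<Rightarrow> 'l"
    and k :: 'k
    and sc :: "'k \<Rightarrow> 'u::ab_group_add \<Rightarrow> 'u"
    and m :: "'u \<Rightarrow> 'u \<Rightarrow> 'u"
    and e q :: 'u
    and i :: "'l \<Rightarrow> 'u"
  assumes "lie_algebra sL br"
    and "k \<noteq> 0"
    and "enveloping6 sL br k sc m e q i"
  shows "\<exists>!S. inv_antihom sc m e q S \<and> S q = e - q \<and>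
           (\<forall>x. S (i x) = - sc (1 / k) (i x) - sc k (m q (i x)) + sc (1 / k) (m (i x) q))"
proof -
  have IA: "invariant_algebra sc m e q" and LH: "lie_hom6 sL br k sc m q i"
    and UP: "\<forall>mA eA qA f. invariant_algebra sc mA eA qA \<and> lie_hom6 sL br k sc mA qA f \<longrightarrow>
        (\<exists>!f'. inv_hom sc m e q sc mA eA qA f' \<and> f = f' \<circ> i)"
    using assms(3) unfolding enveloping6_def by auto
  have KA: "k_algebra sc m e" and qq: "m q q = q" using IA by (auto simp: invariant_algebra_def)
  interpret ialg sc m e by unfold_locales (rule KA)
  have LA: "vector_space sL" using assms(1) by (simp add: lie_algebra_def)
  have lin_i: "Vector_Spaces.linear sL sc i" and i_inv: "\<And>x. i x \<in> inv_part m q"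
    and i_br: "\<And>x y. i (br x y) = bracket6 sc m q k (i x) (i y)"
    using LH unfolding lie_hom6_def by auto
  have i_add: "\<And>x y. i (x + y) = i x + i y" and i_sc: "\<And>c x. i (sL c x) = sc c (i x)"
    using lin_i unfolding Vector_Spaces.linear_iff by auto
  have rel: "\<And>x. m q (m (i x) q) = m q (i x)"
    using i_inv unfolding inv_part_def by (simp add: m_assoc)
  define f where "f = (\<lambda>x. FF k q (i x))"
  have "lie_hom6 sL br k sc (opp m) (e - q) f"
    unfolding lie_hom6_def
  proof (intro conjI allI)
    show "Vector_Spaces.linear sL sc f"
      unfolding Vector_Spaces.linear_iff f_def using LA vs by (simp add: i_add i_sc FF_add FF_sc)
    fix x
    show "f x \<in> inv_part (opp m) (e - q)"
      unfolding inv_part_def opp_def f_def using FF_inv[OF qq rel] by simp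
  next
    fix x y
    show "f (br x y) = bracket6 sc (opp m) (e - q) k (f x) (f y)"
      unfolding f_def i_br using key[OF assms(2) qq rel rel] .
  qed
  hence U: "\<exists>!f'. inv_hom sc m e q sc (opp m) e (e - q) f' \<and> f = f' \<circ> i"
    using UP opp_alg[OF qq] by blast
  have eq: "(inv_antihom sc m e q S \<and> S q = e - q \<and>
           (\<forall>x. S (i x) = - sc (1 / k) (i x) - sc k (m q (i x)) + sc (1 / k) (m (i x) q)))
     \<longleftrightarrow> (inv_hom sc m e q sc (opp m) e (e - q) S \<and> f = S \<circ> i)" for S
    unfolding inv_antihom_def f_def FF_def inv_hom_def by (auto simp: fun_eq_iff)
  show ?thesis unfolding eq using U .
qed

end
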